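(* Let $a\in\mathbb{R}^p$ with $\max_{i=1,\ldots,p}a_i>0$. Let $Z$ be a regularly varying random variable with index $\alpha$, with $b_n$ chosen so that $n\Pr(b_n^{-1}Z>x)\to x^{-\alpha}$ for $x>0$, and assume $n\Pr\{Z\le\exp(-kb_n)\}\to0$ for every $k>0$. Then $a\circ Z=t\{a\,t^{-1}(Z)\}\in RV_+^p(\alpha)$ and, when normalized by $\{b_n\}$, it has angular measure $H_{a\circ Z}(\cdot)=\|a^{(0)}\|^{\alpha}\delta_{a^{(0)}/\|a^{(0)}\|}(\cdot)$, where $a^{(0)}=\max(a,0)$ componentwise and $\delta$ is a Dirac mass.
   Context: $t(y)=\log\{1+\exp(y)\}$, $t^{-1}(x)=\log\{\exp(x)-1\}$, with $a\,t^{-1}(Z)$ the vector $(a_1t^{-1}(Z),\ldots,a_pt^{-1}(Z))$ and $t$ applied componentwise. $X\in RV_+^p(\alpha)$: $X$ takes values in $[0,\infty)^p$ and $n\Pr(b_n^{-1}X\in\cdot)\stackrel{v}{\to}\nu_X$ vaguely on $[0,\infty]^p\setminus\{0\}$ for a nonzero $\nu_X$. For a fixed norm $\|\cdot\|$ and $\mathbb{S}^+_{p-1}=\{x\in\mathbb{R}^p_+:\|x\|=1\}$, the angular measure $H_X$ satisfies $\nu_X\{x:\|x\|>r,\ x/\|x\|\in B\}=r^{-\alpha}H_X(B)$. *)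

theory Defs
  imports "HOL-Probability.Probability"
begin

definition tfun :: "real \<Rightarrow> real" where
  "tfun y = ln (1 + exp y)"

definition tinv :: "real \<Rightarrow> real" where
  "tinv x = ln (exp x - 1)"

definition circ_vec :: "real ^ 'p \<Rightarrow> real \<Rightarrow> real ^ 'p" where
  "circ_vec a z = (\<chi> i. tfun (a $ i * tinv z))"

definition is_norm :: "(real ^ 'p \<Rightarrow> real) \<Rightarrow> bool" where
  "is_norm N \<longleftrightarrow> (\<forall>x. 0 \<le> N x) \<and> (\<forall>x. N x = 0 \<longleftrightarrow> x = 0)
     \<and> (\<forall>c x. N (c *\<^sub>R x) = \<bar>c\<bar> * N x) \<and> (\<forall>x y. N (x + y) \<le> N x + N y)"

definition emb :: "real ^ 'p \<Rightarrow> ereal ^ 'p" where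
  "emb y = (\<chi> i. ereal (y $ i))"

definition cone :: "(ereal ^ 'p) set" where
  "cone = {x. \<forall>i. 0 \<le> x $ i}"

definition Espace :: "(ereal ^ 'p) set" where
  "Espace = cone - {0}"

text \<open>Test functions for vague convergence on E: nonnegative, continuous on [0,inf]^p,
  with compact support in E, i.e. vanishing on a neighbourhood of 0 in [0,inf]^p.
  (Borel measurability is imposed for convenience; it is no loss since both
  sides only see the values on the cone.)\<close>
definition testfun :: "(ereal ^ 'p \<Rightarrow> real) \<Rightarrow> bool" where
  "testfun f \<longleftrightarrow> (\<forall>x. 0 \<le> f x) \<and> continuous_on cone f \<and> f \<in> borel_measurable borel
     \<and> (\<exists>\<epsilon>>0. \<forall>x\<in>cone. (\<forall>i. x $ i < ereal \<epsilon>) \<longrightarrow> f x = 0)"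

text \<open>nu is a Radon measure on E (viewed as a Borel measure on [-inf,inf]^p vanishing off E).\<close>
definition radon_on_E :: "(ereal ^ 'p) measure \<Rightarrow> bool" where
  "radon_on_E \<nu> \<longleftrightarrow> sets \<nu> = sets borel \<and> emeasure \<nu> (UNIV - Espace) = 0
     \<and> (\<forall>\<epsilon>>0. emeasure \<nu> {x\<in>cone. \<exists>i. ereal \<epsilon> \<le> x $ i} < \<infinity>)"

definition vague_conv :: "'a measure \<Rightarrow> ('a \<Rightarrow> real ^ 'p) \<Rightarrow> (nat \<Rightarrow> real)
     \<Rightarrow> (ereal ^ 'p) measure \<Rightarrow> bool" where
  "vague_conv M X b \<nu> \<longleftrightarrow> (\<forall>f. testfun f \<longrightarrow>
     ((\<lambda>n. ennreal (real n) * (\<integral>\<^sup>+ \<omega>. ennreal (f (emb ((1 / b n) *\<^sub>R X \<omega>))) \<partial>M))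
        \<longlongrightarrow> (\<integral>\<^sup>+ x. ennreal (f x) \<partial>\<nu>)) sequentially)"

definition escale :: "real \<Rightarrow> ereal ^ 'p \<Rightarrow> ereal ^ 'p" where
  "escale c x = (\<chi> i. ereal c * x $ i)"

definition RV_plus :: "'a measure \<Rightarrow> ('a \<Rightarrow> real ^ 'p) \<Rightarrow> real \<Rightarrow> (nat \<Rightarrow> real)
     \<Rightarrow> (ereal ^ 'p) measure \<Rightarrow> bool" where
  "RV_plus M X \<alpha> b \<nu> \<longleftrightarrow>
     (\<forall>\<omega>\<in>space M. \<forall>i. 0 \<le> X \<omega> $ i) \<and> radon_on_E \<nu> \<and> vague_conv M X b \<nu>
     \<and> emeasure \<nu> (space \<nu>) \<noteq> 0
     \<and> (\<forall>c>0. \<forall>A\<in>sets borel. A \<subseteq> Espace \<longrightarrow>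
          emeasure \<nu> (escale c ` A) = ennreal (c powr (-\<alpha>)) * emeasure \<nu> A)"

definition polar_set :: "(real ^ 'p \<Rightarrow> real) \<Rightarrow> real \<Rightarrow> (real ^ 'p) set \<Rightarrow> (ereal ^ 'p) set" where
  "polar_set N r B = emb ` {y. (\<forall>i. 0 \<le> y $ i) \<and> N y > r \<and> (1 / N y) *\<^sub>R y \<in> B}"

definition sphere_plus :: "(real ^ 'p \<Rightarrow> real) \<Rightarrow> (real ^ 'p) set" where
  "sphere_plus N = {x. (\<forall>i. 0 \<le> x $ i) \<and> N x = 1}"

definition angular_measure :: "(real ^ 'p \<Rightarrow> real) \<Rightarrow> real \<Rightarrow> (ereal ^ 'p) measure
     \<Rightarrow> ((real ^ 'p) set \<Rightarrow> ennreal) \<Rightarrow> bool" where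
  "angular_measure N \<alpha> \<nu> H \<longleftrightarrow> (\<forall>r>0. \<forall>B\<in>sets borel. B \<subseteq> sphere_plus N \<longrightarrow>
     emeasure \<nu> (polar_set N r B) = ennreal (r powr (-\<alpha>)) * H B)"

end

theory Submission
  imports Defs
begin


lemma tfun_ge: "max y 0 \<le> tfun y"
proof -
  have "exp y \<le> 1 + exp y" by simp
  hence "y \<le> ln (1 + exp y)" by (metis exp_gt_zero ln_exp ln_le_cancel_iff add_pos_pos zero_less_one)
  moreover have "0 \<le> ln (1 + exp y)" by (simp add: add_pos_pos)
  ultimately show ?thesis by (simp add: tfun_def)
qed

lemma tfun_pos: "0 < tfun y"
  unfolding tfun_def by (simp add: add_pos_pos)

lemma tfun_le: "tfun y \<le> max y 0 + ln 2"
proof -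
  have "1 + exp y \<le> 2 * exp (max y 0)"
    by (cases "y \<le> 0") (auto simp: max_def)
  hence "ln (1 + exp y) \<le> ln (2 * exp (max y 0))"
    by (simp add: add_pos_pos)
  also have "\<dots> = ln 2 + max y 0" by (simp add: ln_mult)
  finally show ?thesis by (simp add: tfun_def)
qed

lemma tinv_lt: assumes "z > 0" shows "tinv z < z"
proof -
  have "exp z - 1 > 0" using assms by simp
  hence "ln (exp z - 1) < ln (exp z)" by (subst ln_less_cancel_iff) auto
  thus ?thesis by (simp add: tinv_def)
qed

lemma tinv_ge_ln: assumes "z > 0" shows "ln z \<le> tinv z"
proof -
  have "z \<le> exp z - 1" using exp_ge_add_one_self[of z] by linarith
  thus ?thesis unfolding tinv_def using assms by simp
qed

lemma tinv_ge: assumes "z \<ge> 1" shows "z - 1 \<le> tinv z"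
proof -
  have e: "exp 1 \<ge> (2::real)" using exp_ge_add_one_self[of 1] by simp
  have "exp (z - 1) * 1 \<le> exp (z - 1) * (exp 1 - 1)" using e by simp
  also have "\<dots> = exp z - exp (z - 1)" by (simp add: algebra_simps flip: exp_add)
  finally have "2 * exp (z - 1) \<le> exp z" by simp
  moreover have "1 \<le> exp (z - 1)" using assms by simp
  ultimately have "exp (z - 1) \<le> exp z - 1" by linarith
  hence "ln (exp (z - 1)) \<le> ln (exp z - 1)" using assms by (subst ln_le_cancel_iff) auto
  thus ?thesis by (simp add: tinv_def)
qed

lemma tfun_tinv_big:
  assumes "z \<ge> 1"
  shows "\<bar>tfun (a * tinv z) - max a 0 * z\<bar> \<le> \<bar>a\<bar> + ln 2"
proof -
  have t1: "z - 1 \<le> tinv z" "tinv z \<le> z" using tinv_ge[OF assms] tinv_lt[of z] assms by auto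
  have l2: "0 \<le> ln (2::real)" by simp
  show ?thesis
  proof (cases "a \<ge> 0")
    case True
    have "a * (z - 1) \<le> a * tinv z" "a * tinv z \<le> a * z"
      using t1 True by (auto intro: mult_left_mono)
    moreover have "max (a * tinv z) 0 \<le> a * z" "a * z - a \<le> max (a * tinv z) 0"
      using calculation True assms by (auto simp: algebra_simps)
    ultimately show ?thesis using tfun_ge[of "a * tinv z"] tfun_le[of "a * tinv z"] True l2
      unfolding abs_le_iff by (simp only: abs_of_nonneg max_absorb1) linarith
  next
    case False
    have "a * tinv z \<le> 0" using t1 False assms by (simp add: mult_nonpos_nonneg)
    then show ?thesis using tfun_ge[of "a * tinv z"] tfun_le[of "a * tinv z"] False l2
      by (auto simp: max_def)
  qed
qed

lemma tfun_tinv_small: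
  assumes "exp (- k * b) < z" "z \<le> c * b" "b > 0" "k > 0" "c > 0"
  shows "tfun (a * tinv z) \<le> \<bar>a\<bar> * (c + k) * b + ln 2"
proof -
  have zp: "z > 0" using assms(1) by (metis exp_gt_zero less_trans)
  have "ln z > - k * b" using assms(1) zp by (metis ln_exp ln_less_cancel_iff exp_gt_zero)
  hence lo: "tinv z > - k * b" using tinv_ge_ln[OF zp] by simp
  have hi: "tinv z < c * b" using tinv_lt[OF zp] assms(2) by simp
  have "a * tinv z \<le> \<bar>a\<bar> * (c + k) * b"
  proof (cases "a \<ge> 0")
    case True
    have "a * tinv z \<le> a * (c * b)" using hi True by (simp add: mult_left_mono)
    also have "\<dots> \<le> a * ((c + k) * b)" using True assms by (intro mult_left_mono) auto
    finally show ?thesis using True by (simp add: algebra_simps)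
  next
    case False
    have "a * tinv z \<le> a * (- k * b)" using lo False by (intro mult_left_mono_neg) auto
    also have "\<dots> \<le> \<bar>a\<bar> * ((c + k) * b)" using False assms by (simp add: mult_left_mono)
    finally show ?thesis by (simp add: algebra_simps)
  qed
  moreover have "0 \<le> \<bar>a\<bar> * (c + k) * b" using assms by simp
  ultimately have "max (a * tinv z) 0 \<le> \<bar>a\<bar> * (c + k) * b" by simp
  thus ?thesis using tfun_le[of "a * tinv z"] by linarith
qed


lemma emb_inj: "emb x = emb y \<longleftrightarrow> x = y"
  by (auto simp: emb_def vec_eq_iff)

lemma emb_nth[simp]: "emb y $ i = ereal (y $ i)"
  by (simp add: emb_def)

lemma continuous_emb: "continuous_on UNIV (emb :: real^'p \<Rightarrow> ereal^'p)"
  unfolding continuous_on_def emb_def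
  by (auto intro!: tendsto_vec_lambda tendsto_vec_nth simp: lim_ereal)

lemma tendsto_emb: "(f \<longlongrightarrow> l) F \<Longrightarrow> ((\<lambda>x. emb (f x)) \<longlongrightarrow> emb l) F"
  unfolding emb_def
  by (auto intro!: tendsto_vec_lambda tendsto_vec_nth simp: lim_ereal)

lemma emb_measurable[measurable]: "emb \<in> borel_measurable borel"
  by (rule borel_measurable_continuous_onI[OF continuous_emb])

lemma emb_cone: "(\<forall>i. 0 \<le> y $ i) \<Longrightarrow> emb y \<in> cone"
  by (simp add: cone_def)

lemma emb_zero: "emb y = 0 \<longleftrightarrow> y = 0"
  by (auto simp: emb_def vec_eq_iff)

lemma escale_emb: "escale c (emb y) = emb (c *\<^sub>R y)"
  by (simp add: escale_def emb_def)

lemma escale_inj: "c > 0 \<Longrightarrow> escale c x = escale c y \<Longrightarrow> x = y"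
  by (auto simp: escale_def vec_eq_iff ereal_mult_cancel_left)

lemma closed_cone: "closed (cone :: (ereal^'p) set)"
proof -
  have "closed {x :: ereal^'p. \<forall>i. x $ i \<in> {0..}}" by (rule closed_vector_box) auto
  thus ?thesis by (simp add: cone_def)
qed

lemma Espace_borel[measurable]: "(Espace :: (ereal^'p) set) \<in> sets borel"
  proof -
  have "{0::ereal^'p} = {x. \<forall>i. x $ i \<in> {0}}" by (auto simp: vec_eq_iff)
  hence "closed {0::ereal^'p}" using closed_vector_box[of "\<lambda>_. {0::ereal}"] by simp
  thus ?thesis unfolding Espace_def using closed_cone by (intro sets.Diff borel_closed)
qed

lemma escale_escale: "escale a (escale b x) = escale (a * b) x"
  by (simp add: escale_def vec_eq_iff mult.assoc[symmetric])

lemma escale_one[simp]: "escale 1 x = x"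
  by (simp add: escale_def vec_eq_iff)

definition rayv :: "real \<Rightarrow> real ^ 'p \<Rightarrow> real \<Rightarrow> ereal ^ 'p" where
  "rayv \<alpha> v s = emb ((s powr (-1/\<alpha>)) *\<^sub>R v)"

definition nuv :: "real \<Rightarrow> real ^ 'p \<Rightarrow> (ereal ^ 'p) measure" where
  "nuv \<alpha> v = distr (restrict_space lborel {0<..}) borel (rayv \<alpha> v)"

lemma rayv_measurable[measurable]: "rayv \<alpha> v \<in> borel_measurable borel"
  unfolding rayv_def by measurable

lemma rayv_measurable2: "rayv \<alpha> v \<in> measurable (restrict_space lborel {0<..}) borel"
  by (rule measurable_restrict_space1) simp

lemma sets_nuv[simp]: "sets (nuv \<alpha> v) = sets borel"
  by (simp add: nuv_def)

lemma space_nuv[simp]: "space (nuv \<alpha> v) = UNIV"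
  by (simp add: nuv_def)

lemma emeasure_nuv:
  assumes "A \<in> sets borel"
  shows "emeasure (nuv \<alpha> v) A = emeasure lborel {s\<in>{0<..}. rayv \<alpha> v s \<in> A}"
proof -
  have "emeasure (nuv \<alpha> v) A = emeasure (restrict_space lborel {0<..}) (rayv \<alpha> v -` A \<inter> {0<..})"
    unfolding nuv_def using assms
    by (subst emeasure_distr[OF rayv_measurable2]) (auto simp: space_restrict_space)
  also have "\<dots> = emeasure lborel (rayv \<alpha> v -` A \<inter> {0<..})"
    by (rule emeasure_restrict_space) auto
  also have "rayv \<alpha> v -` A \<inter> {0<..} = {s\<in>{0<..}. rayv \<alpha> v s \<in> A}" by auto
  finally show ?thesis .
qed

lemma nn_integral_nuv:
  assumes [measurable]: "f \<in> borel_measurable borel"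
  shows "(\<integral>\<^sup>+ x. f x \<partial>nuv \<alpha> v) = (\<integral>\<^sup>+ s. f (rayv \<alpha> v s) * indicator {0<..} s \<partial>lborel)"
  unfolding nuv_def
  by (subst nn_integral_distr[OF rayv_measurable2]) (auto simp: nn_integral_restrict_space)

lemma powr_inv_less_iff:
  fixes s q \<alpha> :: real
  assumes "s > 0" "q > 0" "\<alpha> > 0"
  shows "q < s powr (-1/\<alpha>) \<longleftrightarrow> s < q powr (-\<alpha>)"
proof
  assume h: "q < s powr (-1/\<alpha>)"
  have "(s powr (-1/\<alpha>)) powr (-\<alpha>) < q powr (-\<alpha>)"
    by (rule powr_less_mono2_neg) (use assms h in auto)
  also have "(s powr (-1/\<alpha>)) powr (-\<alpha>) = s" using assms by (simp add: powr_powr)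
  finally show "s < q powr (-\<alpha>)" .
next
  assume h: "s < q powr (-\<alpha>)"
  have "(q powr (-\<alpha>)) powr (-1/\<alpha>) < s powr (-1/\<alpha>)"
    by (rule powr_less_mono2_neg) (use assms h in auto)
  also have "(q powr (-\<alpha>)) powr (-1/\<alpha>) = q" using assms by (simp add: powr_powr)
  finally show "q < s powr (-1/\<alpha>)" .
qed

lemma powr_inv_le_iff:
  fixes s q \<alpha> :: real
  assumes "s > 0" "q > 0" "\<alpha> > 0"
  shows "q \<le> s powr (-1/\<alpha>) \<longleftrightarrow> s \<le> q powr (-\<alpha>)"
proof -
  have "\<not> (q \<le> s powr (-1/\<alpha>)) \<longleftrightarrow> \<not> (s \<le> q powr (-\<alpha>))"
  proof -
    have "s powr (-1/\<alpha>) < q \<longleftrightarrow> q powr (-\<alpha>) < s"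
    proof
      assume h: "s powr (-1/\<alpha>) < q"
      have "q powr (-\<alpha>) < (s powr (-1/\<alpha>)) powr (-\<alpha>)"
        by (rule powr_less_mono2_neg) (use assms h in auto)
      also have "(s powr (-1/\<alpha>)) powr (-\<alpha>) = s" using assms by (simp add: powr_powr)
      finally show "q powr (-\<alpha>) < s" .
    next
      assume h: "q powr (-\<alpha>) < s"
      have "s powr (-1/\<alpha>) < (q powr (-\<alpha>)) powr (-1/\<alpha>)"
        by (rule powr_less_mono2_neg) (use assms h in auto)
      also have "(q powr (-\<alpha>)) powr (-1/\<alpha>) = q" using assms by (simp add: powr_powr)
      finally show "s powr (-1/\<alpha>) < q" .
    qed
    thus ?thesis by auto
  qed
  thus ?thesis by blast
qed

context
  fixes \<alpha> :: real and v :: "real ^ 'p"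
  assumes \<alpha>: "\<alpha> > 0" and vnn: "\<forall>i. 0 \<le> v $ i" and vnz: "v \<noteq> 0"
begin

lemma rayv_Espace: "s > 0 \<Longrightarrow> rayv \<alpha> v s \<in> Espace"
  unfolding rayv_def Espace_def using vnn vnz
  by (auto simp: cone_def emb_zero)

lemma nuv_radon: "radon_on_E (nuv \<alpha> v)"
  unfolding radon_on_E_def
proof (intro conjI allI impI)
  show "sets (nuv \<alpha> v) = sets borel" by simp
  have "emeasure (nuv \<alpha> v) (UNIV - Espace) = emeasure lborel {s\<in>{0<..}. rayv \<alpha> v s \<in> UNIV - Espace}"
    by (rule emeasure_nuv) (auto intro: sets.compl_sets)
  also have "{s\<in>{0<..}. rayv \<alpha> v s \<in> UNIV - Espace} = {}" using rayv_Espace by auto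
  finally show "emeasure (nuv \<alpha> v) (UNIV - Espace) = 0" by simp
next
  fix \<epsilon> :: real assume e: "\<epsilon> > 0"
  define m where "m = (\<Sum>i\<in>UNIV. v $ i)"
  have vm: "v $ i \<le> m" for i unfolding m_def using vnn by (intro member_le_sum) auto
  have mpos: "m > 0"
  proof -
    obtain i where "v $ i \<noteq> 0" using vnz by (auto simp: vec_eq_iff)
    hence "v $ i > 0" using vnn[rule_format, of i] by linarith
    thus ?thesis using vm[of i] by linarith
  qed
  have meas: "{x\<in>(cone :: (ereal^'p) set). \<exists>i. ereal \<epsilon> \<le> x $ i} \<in> sets borel"
  proof -
    have eq: "{x\<in>cone. \<exists>i. ereal \<epsilon> \<le> x $ i} = cone \<inter> (\<Union>i. {x. ereal \<epsilon> \<le> x $ i})" by auto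
    have c1: "cone \<in> sets (borel :: (ereal^'p) measure)"
    proof -
      have "closed {x :: ereal^'p. \<forall>i. x $ i \<in> {0..}}" by (rule closed_vector_box) auto
      thus ?thesis by (simp add: cone_def)
    qed
    have c2: "{x :: ereal^'p. ereal \<epsilon> \<le> x $ i} \<in> sets borel" for i
    proof -
      have "closed ((\<lambda>x. x $ i) -` {ereal \<epsilon>..} :: (ereal^'p) set)"
        by (rule closed_vimage_vec_nth) auto
      thus ?thesis by (simp add: vimage_def)
    qed
    show ?thesis unfolding eq using c1 c2 by (intro sets.Int sets.finite_UN) auto
  qed
  have sub: "{s\<in>{0<..}. rayv \<alpha> v s \<in> {x\<in>cone. \<exists>i. ereal \<epsilon> \<le> x $ i}} \<subseteq> {0<..(\<epsilon>/m) powr (-\<alpha>)}"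
  proof (rule subsetI)
    fix s :: real assume "s \<in> {s\<in>{0<..}. rayv \<alpha> v s \<in> {x\<in>cone. \<exists>i. ereal \<epsilon> \<le> x $ i}}"
    then obtain i where s: "s > 0" and h: "ereal \<epsilon> \<le> rayv \<alpha> v s $ i" by auto
    have "\<epsilon> \<le> s powr (-1/\<alpha>) * v $ i" using h by (simp add: rayv_def)
    also have "\<dots> \<le> s powr (-1/\<alpha>) * m" using vm[of i] by (simp add: mult_left_mono)
    finally have "\<epsilon> / m \<le> s powr (-1/\<alpha>)" using mpos by (simp add: divide_le_eq)
    hence "s \<le> (\<epsilon>/m) powr (-\<alpha>)" using powr_inv_le_iff[of s "\<epsilon>/m" \<alpha>] s e mpos \<alpha> by auto
    thus "s \<in> {0<..(\<epsilon>/m) powr (-\<alpha>)}" using s by simp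
  qed
  have "emeasure (nuv \<alpha> v) {x\<in>cone. \<exists>i. ereal \<epsilon> \<le> x $ i}
      = emeasure lborel {s\<in>{0<..}. rayv \<alpha> v s \<in> {x\<in>cone. \<exists>i. ereal \<epsilon> \<le> x $ i}}"
    by (rule emeasure_nuv[OF meas])
  also have "\<dots> \<le> emeasure lborel {0<..(\<epsilon>/m) powr (-\<alpha>)}"
    by (rule emeasure_mono[OF sub]) simp
  also have "\<dots> < \<infinity>" by simp
  finally show "emeasure (nuv \<alpha> v) {x\<in>cone. \<exists>i. ereal \<epsilon> \<le> x $ i} < \<infinity>" .
qed

lemma nuv_nonzero: "emeasure (nuv \<alpha> v) (space (nuv \<alpha> v)) \<noteq> 0"
proof -
  have "emeasure (nuv \<alpha> v) (space (nuv \<alpha> v)) = emeasure lborel {s\<in>{0<..}. rayv \<alpha> v s \<in> UNIV}"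
    by (simp add: emeasure_nuv)
  also have "\<dots> = emeasure lborel {0::real<..}" by (intro arg_cong[where f="emeasure lborel"]) auto
  also have "\<dots> \<ge> emeasure lborel {0::real<..<1}" by (rule emeasure_mono) auto
  finally show ?thesis by (auto simp: le_zero_eq)
qed

lemma rayv_scale:
  assumes c: "c > 0" and s: "s > 0"
  shows "escale c (rayv \<alpha> v (c powr \<alpha> * s)) = rayv \<alpha> v s"
proof -
  have "(c powr \<alpha> * s) powr (-1/\<alpha>) = c powr (\<alpha> * (-1/\<alpha>)) * s powr (-1/\<alpha>)"
    using c s by (simp add: powr_mult powr_powr)
  also have "c powr (\<alpha> * (-1/\<alpha>)) = 1 / c" using \<alpha> c by (simp add: powr_minus_divide)
  finally show ?thesis using c by (simp add: rayv_def escale_emb)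
qed

lemma nuv_homog:
  assumes c: "c > 0" and A: "A \<in> sets borel"
  shows "emeasure (nuv \<alpha> v) (escale c ` A) = ennreal (c powr (-\<alpha>)) * emeasure (nuv \<alpha> v) A"
proof -
  define d where "d = c powr \<alpha>"
  have d: "d > 0" using c by (simp add: d_def)
  have eq: "{s\<in>{0<..}. rayv \<alpha> v s \<in> escale c ` A} = {s\<in>{0<..}. rayv \<alpha> v (d * s) \<in> A}"
  proof safe
    fix s :: real and x assume s: "s > 0" and x: "x \<in> A" and h: "rayv \<alpha> v s = escale c x"
    have "escale c x = escale c (rayv \<alpha> v (d * s))" using rayv_scale[OF c s] h by (simp add: d_def)
    hence "x = rayv \<alpha> v (d * s)" using escale_inj[OF c] by blast
    thus "rayv \<alpha> v (d * s) \<in> A" using x by simp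
  next
    fix s :: real assume s: "s > 0" and h: "rayv \<alpha> v (d * s) \<in> A"
    show "rayv \<alpha> v s \<in> escale c ` A"
      using rayv_scale[OF c s] h unfolding d_def by (metis image_eqI)
  qed
  have measR[measurable]: "{s\<in>{0<..}. rayv \<alpha> v s \<in> A} \<in> sets borel" using A by measurable
  have measR2: "{s\<in>{0<..}. rayv \<alpha> v (d * s) \<in> A} \<in> sets borel" using A by measurable
  have "emeasure lborel {s\<in>{0<..}. rayv \<alpha> v s \<in> A}
      = (\<integral>\<^sup>+ s. indicator {s\<in>{0<..}. rayv \<alpha> v s \<in> A} s \<partial>lborel)"
    by (rule nn_integral_indicator[symmetric]) (use measR in simp)
  also have "\<dots> = ennreal \<bar>d\<bar> * (\<integral>\<^sup>+ s. indicator {s\<in>{0<..}. rayv \<alpha> v s \<in> A} (0 + d * s) \<partial>lborel)"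
    apply (rule nn_integral_real_affine) using d measR by (auto intro!: borel_measurable_indicator)
  also have "(\<lambda>s. indicator {s\<in>{0<..}. rayv \<alpha> v s \<in> A} (0 + d * s) :: ennreal)
      = indicator {s\<in>{0<..}. rayv \<alpha> v (d * s) \<in> A}"
    using d by (auto simp: indicator_def fun_eq_iff zero_less_mult_iff)
  also have "(\<integral>\<^sup>+ s. indicator {s\<in>{0<..}. rayv \<alpha> v (d * s) \<in> A} s \<partial>lborel)
      = emeasure lborel {s\<in>{0<..}. rayv \<alpha> v (d * s) \<in> A}"
    by (rule nn_integral_indicator) (use measR2 in simp)
  finally have key: "emeasure lborel {s\<in>{0<..}. rayv \<alpha> v s \<in> A}
      = ennreal d * emeasure lborel {s\<in>{0<..}. rayv \<alpha> v (d * s) \<in> A}" using d by simp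
  have cd: "ennreal (c powr (-\<alpha>)) * ennreal d = 1"
    using c by (simp add: d_def ennreal_mult'[symmetric] powr_minus field_simps)
  have imA: "escale c ` A \<in> sets borel"
  proof -
    have "escale c ` A = escale (1/c) -` A"
    proof (intro equalityI subsetI)
      fix z assume "z \<in> escale c ` A"
      then obtain x where "x \<in> A" "z = escale c x" by auto
      thus "z \<in> escale (1/c) -` A"
        using c by (simp add: escale_escale)
    next
      fix y assume "y \<in> escale (1/c) -` A"
      moreover have "y = escale c (escale (1/c) y)"
        using c by (simp add: escale_escale)
      ultimately show "y \<in> escale c ` A" by (metis vimageD image_eqI)
    qed
    moreover have "escale (1/c) \<in> borel_measurable borel"
      unfolding escale_def
      using c by (intro borel_measurable_continuous_onI)
         (auto simp: continuous_on_def intro!: tendsto_vec_lambda tendsto_vec_nth tendsto_mult_ereal)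
    ultimately show ?thesis using A by (metis measurable_sets space_borel Int_UNIV_right)
  qed
  have "emeasure (nuv \<alpha> v) (escale c ` A) = emeasure lborel {s\<in>{0<..}. rayv \<alpha> v (d * s) \<in> A}"
    using emeasure_nuv[OF imA] eq by simp
  also have "\<dots> = ennreal (c powr (-\<alpha>)) * (ennreal d * emeasure lborel {s\<in>{0<..}. rayv \<alpha> v (d * s) \<in> A})"
    using cd by (simp add: mult.assoc[symmetric])
  also have "\<dots> = ennreal (c powr (-\<alpha>)) * emeasure (nuv \<alpha> v) A"
    using key emeasure_nuv[OF A] by simp
  finally show ?thesis .
qed

end


lemma vec_lambda_measurable:
  "(\<And>i. (\<lambda>x. f x i) \<in> borel_measurable M) \<Longrightarrow> (\<lambda>x. (\<chi> i. f x i) :: real^'p) \<in> borel_measurable M"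
  by (subst borel_measurable_euclidean_space) (auto simp: Basis_vec_def inner_axis)

lemma vec_nth_ereal_measurable[measurable]: "(\<lambda>x :: ereal^'p. x $ i) \<in> borel_measurable borel"
  by (rule borel_measurable_continuous_onI) (auto simp: continuous_on_def intro!: tendsto_vec_nth)

lemma emb_image_borel:
  assumes S: "S \<in> sets (borel :: (real^'p) measure)"
  shows "emb ` S \<in> sets (borel :: (ereal^'p) measure)"
proof -
  have eq: "emb ` S = {x. (\<forall>i. \<bar>x $ i\<bar> \<noteq> \<infinity>) \<and> (\<chi> i. real_of_ereal (x $ i)) \<in> S}"
  proof (intro equalityI subsetI)
    fix x assume "x \<in> emb ` S"
    then obtain y where "y \<in> S" "x = emb y" by auto
    moreover have "(\<chi> i. real_of_ereal (emb y $ i)) = y" by (simp add: vec_eq_iff)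
    ultimately show "x \<in> {x. (\<forall>i. \<bar>x $ i\<bar> \<noteq> \<infinity>) \<and> (\<chi> i. real_of_ereal (x $ i)) \<in> S}" by simp
  next
    fix x assume h: "x \<in> {x. (\<forall>i. \<bar>x $ i\<bar> \<noteq> \<infinity>) \<and> (\<chi> i. real_of_ereal (x $ i)) \<in> S}"
    have "x = emb (\<chi> i. real_of_ereal (x $ i))" using h by (simp add: vec_eq_iff emb_def ereal_real')
    thus "x \<in> emb ` S" using h by blast
  qed
  have m: "(\<lambda>x :: ereal^'p. (\<chi> i. real_of_ereal (x $ i)) :: real^'p) \<in> borel_measurable borel"
    by (rule vec_lambda_measurable) measurable
  have "{x :: ereal^'p. (\<chi> i. real_of_ereal (x $ i)) \<in> S} \<in> sets borel"
    using measurable_sets[OF m S] by (simp add: vimage_def)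
  moreover have "{x :: ereal^'p. \<forall>i. \<bar>x $ i\<bar> \<noteq> \<infinity>} \<in> sets borel" by measurable
  ultimately show ?thesis unfolding eq by (simp add: Collect_conj_eq)
qed

lemma emb_mem_image: "emb y \<in> emb ` S \<longleftrightarrow> y \<in> S"
  by (auto simp: emb_inj)

lemma is_norm_sum:
  assumes "is_norm N" "finite I"
  shows "N (sum f I) \<le> (\<Sum>i\<in>I. N (f i))"
  using assms(2)
proof induct
  case empty
  have "N 0 = 0" using assms(1) by (simp add: is_norm_def)
  thus ?case by simp
next
  case (insert i I)
  thus ?case using assms(1) unfolding is_norm_def
    by (simp add: sum.insert) (metis add_left_mono order_trans)
qed

lemma is_norm_bound:
  assumes N: "is_norm N"
  shows "\<exists>C\<ge>0. \<forall>x. N x \<le> C * norm x"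
proof -
  define C where "C = (\<Sum>i\<in>UNIV. N (axis i (1::real) :: real^'a))"
  have C0: "C \<ge> 0" unfolding C_def using N by (intro sum_nonneg) (auto simp: is_norm_def)
  have "N x \<le> C * norm x" for x :: "real^'a"
  proof -
    have "N x = N (\<Sum>i\<in>UNIV. x $ i *\<^sub>R axis i 1)"
      using basis_expansion[of x] by (simp add: scalar_mult_eq_scaleR)
    also have "\<dots> \<le> (\<Sum>i\<in>UNIV. N (x $ i *\<^sub>R axis i 1))" by (rule is_norm_sum[OF N]) simp
    also have "\<dots> = (\<Sum>i\<in>UNIV. \<bar>x $ i\<bar> * N (axis i 1))" using N by (simp add: is_norm_def)
    also have "\<dots> \<le> (\<Sum>i\<in>UNIV. norm x * N (axis i 1))"
      using N by (intro sum_mono mult_right_mono) (auto simp: is_norm_def component_le_norm_cart)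
    also have "\<dots> = C * norm x" by (simp add: C_def sum_distrib_left mult.commute)
    finally show ?thesis .
  qed
  thus ?thesis using C0 by blast
qed

lemma is_norm_continuous:
  assumes N: "is_norm N"
  shows "continuous_on UNIV (N :: real^'a \<Rightarrow> real)"
proof -
  obtain C where C: "C \<ge> 0" "\<And>x. N x \<le> C * norm x" using is_norm_bound[OF N] by blast
  have tri: "N x \<le> N y + N (x - y)" for x y
    using N unfolding is_norm_def by (metis add.commute diff_add_cancel)
  have sym: "N (x - y) = N (y - x)" for x y
  proof -
    from N have "N ((-1) *\<^sub>R (x - y)) = \<bar>-1\<bar> * N (x - y)" unfolding is_norm_def by blast
    thus ?thesis by simp
  qed
  have lip: "\<bar>N x - N y\<bar> \<le> C * norm (x - y)" for x y
    using tri[of x y] tri[of y x] sym[of x y] C(2)[of "x - y"] C(2)[of "y - x"]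
    by (simp add: abs_le_iff norm_minus_commute)
  show ?thesis
    unfolding continuous_on_iff
  proof (intro ballI allI impI)
    fix x :: "real^'a" and e :: real assume e: "e > 0"
    show "\<exists>d>0. \<forall>y\<in>UNIV. dist y x < d \<longrightarrow> dist (N y) (N x) < e"
    proof (intro exI[of _ "e / (C + 1)"] conjI ballI impI)
      show "e / (C + 1) > 0" using e C by simp
      fix y assume "dist y x < e / (C + 1)"
      hence "(C + 1) * norm (y - x) < e" using C by (simp add: dist_norm field_simps)
      moreover have "C * norm (y - x) \<le> (C + 1) * norm (y - x)" by (simp add: algebra_simps)
      ultimately show "dist (N y) (N x) < e" using lip[of y x] by (simp add: dist_real_def)
    qed
  qed
qed

lemma is_norm_measurable: "is_norm N \<Longrightarrow> N \<in> borel_measurable borel"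
  by (rule borel_measurable_continuous_onI[OF is_norm_continuous])

lemma polar_set_borel:
  assumes N: "is_norm N" and B: "B \<in> sets borel"
  shows "polar_set N r B \<in> sets borel"
proof -
  have [measurable]: "N \<in> borel_measurable borel" using is_norm_measurable[OF N] .
  have [measurable]: "B \<in> sets borel" using B .
  have "{y :: real^'a. (\<forall>i. 0 \<le> y $ i) \<and> N y > r \<and> (1 / N y) *\<^sub>R y \<in> B} \<in> sets borel"
    by measurable
  thus ?thesis unfolding polar_set_def by (rule emb_image_borel)
qed

context
  fixes \<alpha> :: real and v :: "real ^ 'p"
  assumes \<alpha>: "\<alpha> > 0" and vnn: "\<forall>i. 0 \<le> v $ i" and vnz: "v \<noteq> 0"
begin

lemma nuv_angular:
  assumes N: "is_norm N"
  shows "angular_measure N \<alpha> (nuv \<alpha> v) (\<lambda>B. ennreal (N v powr \<alpha>) * indicator B ((1 / N v) *\<^sub>R v))"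
  unfolding angular_measure_def
proof (intro allI impI ballI)
  fix r :: real and B :: "(real^'p) set" assume r: "r > 0" and B: "B \<in> sets borel"
  have Nv: "N v > 0" using N vnz unfolding is_norm_def by (metis less_eq_real_def)
  define w where "w = (1 / N v) *\<^sub>R v"
  have scal: "N (t *\<^sub>R v) = t * N v" if "t > 0" for t using N that by (simp add: is_norm_def)
  have eq: "{s\<in>{0<..}. rayv \<alpha> v s \<in> polar_set N r B} = (if w \<in> B then {0<..<(r / N v) powr (-\<alpha>)} else {})"
  proof -
    have "rayv \<alpha> v s \<in> polar_set N r B \<longleftrightarrow> (r / N v < s powr (-1/\<alpha>) \<and> w \<in> B)" if s: "s > 0" for s
    proof -
      define t where "t = s powr (-1/\<alpha>)"
      have t: "t > 0" using s by (simp add: t_def)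
      have "rayv \<alpha> v s \<in> polar_set N r B \<longleftrightarrow> ((\<forall>i. 0 \<le> (t *\<^sub>R v) $ i) \<and> N (t *\<^sub>R v) > r \<and> (1 / N (t *\<^sub>R v)) *\<^sub>R (t *\<^sub>R v) \<in> B)"
        unfolding polar_set_def rayv_def t_def[symmetric] emb_mem_image by simp
      moreover have "(1 / N (t *\<^sub>R v)) *\<^sub>R (t *\<^sub>R v) = w" using t Nv by (simp add: scal w_def)
      moreover have "(\<forall>i. 0 \<le> (t *\<^sub>R v) $ i)" using t vnn by simp
      moreover have "N (t *\<^sub>R v) > r \<longleftrightarrow> r / N v < t" using t Nv by (simp add: scal divide_less_eq)
      ultimately show ?thesis by (simp add: t_def)
    qed
    moreover have "r / N v < s powr (-1/\<alpha>) \<longleftrightarrow> s < (r / N v) powr (-\<alpha>)" if "s > 0" for s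
      using powr_inv_less_iff[of s "r / N v" \<alpha>] that r Nv \<alpha> by simp
    ultimately show ?thesis by auto
  qed
  have "emeasure (nuv \<alpha> v) (polar_set N r B) = emeasure lborel {s\<in>{0<..}. rayv \<alpha> v s \<in> polar_set N r B}"
    by (rule emeasure_nuv[OF polar_set_borel[OF N B]])
  also have "\<dots> = (if w \<in> B then ennreal ((r / N v) powr (-\<alpha>)) else 0)" unfolding eq by simp
  also have "\<dots> = ennreal (r powr (-\<alpha>)) * (ennreal (N v powr \<alpha>) * indicator B w)"
  proof -
    have "(r / N v) powr (-\<alpha>) = r powr (-\<alpha>) * N v powr \<alpha>"
      using r Nv by (simp add: powr_divide powr_minus field_simps)
    thus ?thesis using r Nv by (simp add: ennreal_mult' indicator_def)
  qed
  finally show "emeasure (nuv \<alpha> v) (polar_set N r B) = ennreal (r powr - \<alpha>) * (ennreal (N v powr \<alpha>) * indicator B ((1 / N v) *\<^sub>R v))"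
    by (simp add: w_def)
qed

end


definition psi :: "real \<Rightarrow> ereal" where
  "psi y = (if y < 1 then ereal (y / (1 - y)) else \<infinity>)"

lemma psi_cont: "continuous_on {0..1} psi"
  unfolding continuous_on_def
proof (intro ballI)
  fix y :: real assume y: "y \<in> {0..1}"
  show "(psi \<longlongrightarrow> psi y) (at y within {0..1})"
  proof (cases "y < 1")
    case True
    have ev: "eventually (\<lambda>z. z < 1) (at y within {0..1})"
      using order_tendstoD(2)[OF tendsto_ident_at True] .
    have lim: "((\<lambda>z. ereal (z / (1 - z))) \<longlongrightarrow> ereal (y / (1 - y))) (at y within {0..1})"
      using True by (auto simp: lim_ereal intro!: tendsto_intros)
    have ev2: "eventually (\<lambda>z. ereal (z / (1 - z)) = psi z) (at y within {0..1})"
      using ev by eventually_elim (simp add: psi_def)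
    have "(psi \<longlongrightarrow> ereal (y / (1 - y))) (at y within {0..1})"
      by (rule tendsto_cong[THEN iffD1, OF ev2 lim])
    thus ?thesis using True by (simp add: psi_def)
  next
    case False
    hence y1: "y = 1" using y by auto
    have "(psi \<longlongrightarrow> \<infinity>) (at 1 within {0..1})"
      unfolding tendsto_PInfty'[where c=0]
    proof (intro allI impI)
      fix r :: real assume r: "r > 0"
      have "r / (1 + r) < 1" using r by simp
      hence ev: "eventually (\<lambda>z. r / (1 + r) < z) (at 1 within {0..1})"
        using order_tendstoD(1)[OF tendsto_ident_at] by blast
      show "eventually (\<lambda>z. ereal r < psi z) (at 1 within {0..1})"
        using ev
      proof eventually_elim
        case (elim z)
        show ?case
        proof (cases "z < 1")
          case True
          have "r * (1 - z) < z" using elim r by (simp add: field_simps)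
          hence "r < z / (1 - z)" using True by (simp add: field_simps)
          thus ?thesis using True by (simp add: psi_def)
        qed (simp add: psi_def)
      qed
    qed
    thus ?thesis using y1 by (simp add: psi_def)
  qed
qed

lemma psi_nonneg: "y \<in> {0..1} \<Longrightarrow> 0 \<le> psi y"
  by (auto simp: psi_def)

lemma psi_surj: "0 \<le> x \<Longrightarrow> \<exists>y\<in>{0..1}. psi y = x"
proof (cases x)
  case (real r)
  assume "0 \<le> x"
  hence r: "r \<ge> 0" using real by simp
  have "r / (1 + r) < 1" using r by simp
  moreover have "(r / (1 + r)) / (1 - r / (1 + r)) = r" using r by (simp add: field_simps)
  ultimately have "psi (r / (1 + r)) = x" using real by (simp add: psi_def)
  thus ?thesis using r by (intro bexI[of _ "r / (1 + r)"]) auto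
next
  case PInf thus ?thesis by (intro bexI[of _ 1]) (auto simp: psi_def)
next
  case MInf
  assume "0 \<le> x" thus ?thesis using MInf by simp
qed

definition hbox :: "real ^ 'p \<Rightarrow> ereal ^ 'p" where
  "hbox y = (\<chi> i. psi (y $ i))"

lemma compact_cone: "compact (cone :: (ereal ^ 'p) set)"
proof -
  let ?K = "cbox (0 :: real^'p) 1"
  have K: "?K = {y. \<forall>i. y $ i \<in> {0..1}}" by (auto simp: mem_box_cart)
  have "continuous_on ?K hbox"
    unfolding continuous_on_def hbox_def
  proof (intro ballI tendsto_vec_lambda)
    fix x :: "real^'p" and i assume x: "x \<in> ?K"
    show "((\<lambda>y. psi (y $ i)) \<longlongrightarrow> psi (x $ i)) (at x within ?K)"
    proof (rule continuous_on_tendsto_compose[OF psi_cont])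
      show "((\<lambda>y. y $ i) \<longlongrightarrow> x $ i) (at x within ?K)" by (intro tendsto_vec_nth tendsto_ident_at)
      show "x $ i \<in> {0..1}" using x K by auto
      show "eventually (\<lambda>y. y $ i \<in> {0..1}) (at x within ?K)"
        unfolding K eventually_at_filter by simp
    qed
  qed
  hence "compact (hbox ` ?K)" by (intro compact_continuous_image) auto
  moreover have "hbox ` ?K = cone"
  proof (intro equalityI subsetI)
    fix x assume "x \<in> hbox ` ?K"
    thus "x \<in> cone" using K by (auto simp: hbox_def cone_def psi_nonneg)
  next
    fix x :: "ereal^'p" assume "x \<in> cone"
    hence "\<forall>i. \<exists>y\<in>{0..1}. psi y = x $ i" using psi_surj by (auto simp: cone_def)
    then obtain g where g: "\<And>i. g i \<in> {0..1} \<and> psi (g i) = x $ i" by metis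
    have "hbox (\<chi> i. g i) = x" using g by (simp add: hbox_def vec_eq_iff)
    moreover have "(\<chi> i. g i) \<in> ?K" using g K by auto
    ultimately show "x \<in> hbox ` ?K" by blast
  qed
  ultimately show ?thesis by simp
qed

lemma testfun_bounded:
  fixes f :: "ereal^'p \<Rightarrow> real"
  assumes "testfun f"
  shows "\<exists>B. \<forall>x\<in>cone. f x \<le> B"
proof -
  have "continuous_on cone f" using assms by (simp add: testfun_def)
  hence "compact (f ` cone)" using compact_cone by (rule compact_continuous_image)
  hence "bounded (f ` cone)" by (rule compact_imp_bounded)
  then obtain B where "\<forall>y\<in>f ` cone. \<bar>y\<bar> \<le> B" by (auto simp: bounded_real)
  hence "\<forall>x\<in>cone. f x \<le> B"
  proof (intro ballI)
    fix x :: "ereal^'p" assume h: "\<forall>y\<in>f ` cone. \<bar>y\<bar> \<le> B" and x: "x \<in> cone"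
    have "\<bar>f x\<bar> \<le> B" using h x by blast
    thus "f x \<le> B" by linarith
  qed
  thus ?thesis by blast
qed


lemma b_to_infty:
  fixes M :: "'a measure" and Z :: "'a \<Rightarrow> real" and b :: "nat \<Rightarrow> real"
  assumes P: "prob_space M" and Zm: "Z \<in> borel_measurable M" and \<alpha>: "\<alpha> > 0"
    and bpos: "\<forall>n. b n > 0"
    and H1: "\<forall>x>0. ((\<lambda>n. real n * measure M {\<omega>\<in>space M. Z \<omega> / b n > x}) \<longlongrightarrow> x powr (-\<alpha>)) sequentially"
  shows "filterlim b at_top sequentially"
proof -
  interpret prob_space M by (rule P)
  have [measurable]: "Z \<in> borel_measurable M" by (rule Zm)
  let ?q = "\<lambda>y. measure M {\<omega>\<in>space M. Z \<omega> > y}"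
  have qmono: "y1 \<le> y2 \<Longrightarrow> ?q y2 \<le> ?q y1" for y1 y2
    by (intro finite_measure_mono) auto
  have qn: "measure M {\<omega>\<in>space M. Z \<omega> / b n > x} = ?q (x * b n)" for n x
  proof -
    have "{\<omega>\<in>space M. Z \<omega> / b n > x} = {\<omega>\<in>space M. Z \<omega> > x * b n}"
      using bpos[rule_format, of n] by (auto simp: field_simps)
    thus ?thesis by simp
  qed
  have H1': "((\<lambda>n. real n * ?q (x * b n)) \<longlongrightarrow> x powr (-\<alpha>)) sequentially" if "x > 0" for x
    using H1 that qn by simp
  have H11: "((\<lambda>n. real n * ?q (b n)) \<longlongrightarrow> 1) sequentially" using H1'[of 1] by simp
  have qb0: "((\<lambda>n. ?q (b n)) \<longlongrightarrow> 0) sequentially"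
  proof -
    have "((\<lambda>n. (real n * ?q (b n)) * (1 / real n)) \<longlongrightarrow> 1 * 0) sequentially"
      by (intro tendsto_mult H11 lim_const_over_n)
    moreover have "eventually (\<lambda>n. (real n * ?q (b n)) * (1 / real n) = ?q (b n)) sequentially"
      using eventually_gt_at_top[of 0] by eventually_elim simp
    ultimately show ?thesis by (simp add: tendsto_cong)
  qed
  have qpos: "?q K > 0" if K: "K > 0" for K
  proof (rule ccontr)
    assume "\<not> ?q K > 0"
    hence qK: "?q K = 0" using measure_nonneg[of M] by (meson less_eq_real_def not_less)
    have zero: "?q y0 = 0" if y0: "y0 > 0" for y0
    proof (cases "y0 \<ge> K")
      case True thus ?thesis using qmono[OF True] qK measure_nonneg[of M "{\<omega>\<in>space M. Z \<omega> > y0}"] by linarith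
    next
      case False
      define x where "x = K / y0"
      have x: "x > 0" using K y0 by (simp add: x_def)
      have "eventually (\<lambda>n. real n * ?q (x * b n) > 0) sequentially"
        using order_tendstoD(1)[OF H1'[OF x], of 0] x by simp
      hence ev: "eventually (\<lambda>n. b n < y0) sequentially"
      proof eventually_elim
        case (elim n)
        have "?q (x * b n) > 0" using elim by (simp add: zero_less_mult_iff)
        hence "x * b n < K" using qmono[of K "x * b n"] qK by (cases "x * b n < K") auto
        thus "b n < y0" using y0 x by (simp add: x_def field_simps)
      qed
      have "eventually (\<lambda>n. ?q y0 \<le> ?q (b n)) sequentially"
        using ev by eventually_elim (rule qmono, simp)
      hence "?q y0 \<le> 0" using qb0 by (intro tendsto_lowerbound) auto
      thus ?thesis using measure_nonneg[of M "{\<omega>\<in>space M. Z \<omega> > y0}"] by linarith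
    qed
    have "(\<lambda>n. real n * ?q (b n)) = (\<lambda>n. 0)" using zero bpos by (auto simp: fun_eq_iff)
    hence "((\<lambda>n. 0::real) \<longlongrightarrow> 1) sequentially" using H11 by simp
    thus False using LIMSEQ_unique[OF tendsto_const] by fastforce
  qed
  show ?thesis unfolding filterlim_at_top
  proof
    fix K :: real
    show "eventually (\<lambda>n. K \<le> b n) sequentially"
    proof (cases "K > 0")
      case False
      have "K \<le> b n" for n using bpos[rule_format, of n] False by linarith
      thus ?thesis by simp
    next
      case True
      have p: "?q K > 0" using qpos[OF True] .
      have e1: "eventually (\<lambda>n. real n * ?q (b n) < 2) sequentially"
        using order_tendstoD(2)[OF H11, of 2] by simp
      have "filterlim (\<lambda>n. real n * ?q K) at_top sequentially"
        by (rule filterlim_at_top_mult_tendsto_pos[OF tendsto_const p filterlim_real_sequentially])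
      hence e2: "eventually (\<lambda>n. real n * ?q K > 2) sequentially"
        by (simp add: filterlim_at_top_dense)
      show ?thesis using e1 e2
      proof eventually_elim
        case (elim n)
        show "K \<le> b n"
        proof (rule ccontr)
          assume "\<not> K \<le> b n"
          hence "?q K \<le> ?q (b n)" by (intro qmono) simp
          hence "real n * ?q K \<le> real n * ?q (b n)" by (simp add: mult_left_mono)
          thus False using elim by linarith
        qed
      qed
    qed
  qed
qed


lemma circ_vec_nth: "((1 / b) *\<^sub>R circ_vec a z) $ i = tfun (a $ i * tinv z) / b"
  by (simp add: circ_vec_def)

lemma circ_cone: "emb ((1 / b) *\<^sub>R circ_vec a z) \<in> cone" if "b > 0"
  using that tfun_pos by (auto simp: cone_def circ_vec_def less_imp_le)

lemma h_conv:
  fixes f :: "ereal^'p \<Rightarrow> real" and a :: "real^'p" and b :: "nat \<Rightarrow> real"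
  assumes cont: "continuous_on cone f" and binf: "filterlim b at_top sequentially"
    and bpos: "\<forall>n. b n > 0" and yn: "(yn \<longlongrightarrow> y) sequentially" and y: "y > 0"
  shows "((\<lambda>n. f (emb ((1 / b n) *\<^sub>R circ_vec a (b n * yn n))))
           \<longlongrightarrow> f (emb (y *\<^sub>R (\<chi> i. max (a $ i) 0)))) sequentially"
proof -
  have ev1: "eventually (\<lambda>n. 1 \<le> b n * yn n) sequentially"
  proof -
    have "eventually (\<lambda>n. y / 2 < yn n) sequentially" using order_tendstoD(1)[OF yn, of "y/2"] y by simp
    moreover have "eventually (\<lambda>n. 2 / y \<le> b n) sequentially" using binf by (simp add: filterlim_at_top)
    ultimately show ?thesis
    proof eventually_elim
      case (elim n)
      have "(2 / y) * (y / 2) \<le> b n * yn n" using elim y bpos[rule_format, of n] by (intro mult_mono) auto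
      thus ?case using y by simp
    qed
  qed
  have coord: "((\<lambda>n. tfun (a $ i * tinv (b n * yn n)) / b n) \<longlongrightarrow> max (a $ i) 0 * y) sequentially" for i
  proof -
    let ?C = "\<bar>a $ i\<bar> + ln 2"
    have "((\<lambda>n. ?C / b n) \<longlongrightarrow> 0) sequentially"
      by (rule tendsto_divide_0[OF tendsto_const filterlim_at_top_imp_at_infinity[OF binf]])
    moreover have "eventually (\<lambda>n. norm (tfun (a $ i * tinv (b n * yn n)) / b n - max (a $ i) 0 * yn n) \<le> ?C / b n) sequentially"
      using ev1
    proof eventually_elim
      case (elim n)
      have bn: "b n > 0" using bpos by simp
      have "\<bar>tfun (a $ i * tinv (b n * yn n)) - max (a $ i) 0 * (b n * yn n)\<bar> \<le> ?C"
        by (rule tfun_tinv_big[OF elim])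
      moreover have "tfun (a $ i * tinv (b n * yn n)) / b n - max (a $ i) 0 * yn n
          = (tfun (a $ i * tinv (b n * yn n)) - max (a $ i) 0 * (b n * yn n)) / b n"
        using bn by (simp add: field_simps)
      ultimately show ?case using bn by (simp add: abs_divide divide_right_mono)
    qed
    ultimately have "((\<lambda>n. tfun (a $ i * tinv (b n * yn n)) / b n - max (a $ i) 0 * yn n) \<longlongrightarrow> 0) sequentially"
      by (rule Lim_null_comparison[rotated])
    hence "((\<lambda>n. (tfun (a $ i * tinv (b n * yn n)) / b n - max (a $ i) 0 * yn n) + max (a $ i) 0 * yn n)
        \<longlongrightarrow> 0 + max (a $ i) 0 * y) sequentially"
      by (intro tendsto_add tendsto_mult tendsto_const yn)
    thus ?thesis by simp
  qed
  have "((\<lambda>n. (1 / b n) *\<^sub>R circ_vec a (b n * yn n)) \<longlongrightarrow> y *\<^sub>R (\<chi> i. max (a $ i) 0)) sequentially"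
    by (rule vec_tendstoI) (use coord in \<open>simp add: circ_vec_def mult.commute\<close>)
  hence "((\<lambda>n. emb ((1 / b n) *\<^sub>R circ_vec a (b n * yn n))) \<longlongrightarrow> emb (y *\<^sub>R (\<chi> i. max (a $ i) 0))) sequentially"
    by (rule tendsto_emb)
  thus ?thesis
  proof (rule continuous_on_tendsto_compose[OF cont])
    show "emb (y *\<^sub>R (\<chi> i. max (a $ i) 0)) \<in> cone" using y by (auto simp: cone_def)
    show "eventually (\<lambda>n. emb ((1 / b n) *\<^sub>R circ_vec a (b n * yn n)) \<in> cone) sequentially"
      using bpos by (auto intro!: always_eventually circ_cone)
  qed
qed


definition pareto :: "real \<Rightarrow> real \<Rightarrow> real measure" where
  "pareto \<alpha> c = distr (restrict_space lborel {0<..1}) borel (\<lambda>u. c * u powr (-1/\<alpha>))"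

lemma pareto_map_meas:
  fixes c \<alpha> :: real
  shows "(\<lambda>u. c * u powr (-1/\<alpha>)) \<in> measurable (restrict_space lborel {0<..1}) borel"
  by (rule measurable_restrict_space1) measurable

lemma prob_space_unit: "prob_space (restrict_space lborel {0<..(1::real)})"
  by (auto simp: space_restrict_space emeasure_restrict_space intro!: prob_spaceI)

lemma real_distribution_pareto: "real_distribution (pareto \<alpha> c)"
proof -
  interpret U: prob_space "restrict_space lborel {0<..(1::real)}" by (rule prob_space_unit)
  have "prob_space (pareto \<alpha> c)" unfolding pareto_def
    by (rule U.prob_space_distr[OF pareto_map_meas])
  thus ?thesis unfolding real_distribution_def real_distribution_axioms_def
    by (simp add: pareto_def)
qed

lemma cdf_pareto:
  assumes c: "c > 0" and \<alpha>: "\<alpha> > 0"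
  shows "cdf (pareto \<alpha> c) x = (if x \<le> c then 0 else 1 - (x / c) powr (-\<alpha>))"
proof -
  have "cdf (pareto \<alpha> c) x = measure (restrict_space lborel {0<..1}) ((\<lambda>u. c * u powr (-1/\<alpha>)) -` {..x} \<inter> {0<..1})"
    unfolding cdf_def pareto_def
    by (subst measure_distr[OF pareto_map_meas]) (auto simp: space_restrict_space)
  also have "\<dots> = measure lborel ((\<lambda>u. c * u powr (-1/\<alpha>)) -` {..x} \<inter> {0<..1})"
    by (rule measure_restrict_space) auto
  also have "\<dots> = (if x \<le> c then 0 else 1 - (x / c) powr (-\<alpha>))"
  proof (cases "x > 0")
    case False
    have "(\<lambda>u. c * u powr (-1/\<alpha>)) -` {..x} \<inter> {0<..1} = {}"
    proof -
      have "c * u powr (-1/\<alpha>) > x" if "u > 0" for u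
      proof -
        have "c * u powr (-1/\<alpha>) > 0" using that c by simp
        thus ?thesis using False by linarith
      qed
      thus ?thesis by force
    qed
    thus ?thesis using False c by simp
  next
    case True
    define l where "l = (x / c) powr (-\<alpha>)"
    have l: "l > 0" using True c by (simp add: l_def)
    have "(\<lambda>u. c * u powr (-1/\<alpha>)) -` {..x} \<inter> {0<..1} = {l..1}"
    proof -
      have "c * u powr (-1/\<alpha>) \<le> x \<longleftrightarrow> l \<le> u" if u: "u > 0" for u
      proof -
        have "c * u powr (-1/\<alpha>) \<le> x \<longleftrightarrow> \<not> (x / c < u powr (-1/\<alpha>))"
          using c by (simp add: divide_less_eq not_less mult.commute)
        also have "\<dots> \<longleftrightarrow> \<not> (u < l)" unfolding l_def
          using powr_inv_less_iff[of u "x / c" \<alpha>] u True c \<alpha> by simp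
        finally show ?thesis by linarith
      qed
      thus ?thesis using l by (auto; force)
    qed
    moreover have "l \<le> 1 \<longleftrightarrow> c \<le> x"
    proof -
      have "l \<le> 1 \<longleftrightarrow> \<not> (1 < l)" by linarith
      also have "1 < l \<longleftrightarrow> x / c < 1"
        unfolding l_def using powr_inv_less_iff[of 1 "x / c" \<alpha>] True c \<alpha> by simp
      finally show ?thesis using c by (simp add: divide_less_eq not_less)
    qed
    ultimately show ?thesis
      by (cases "x \<le> c"; cases "x = c") (auto simp: l_def)
  qed
  finally show ?thesis .
qed


lemma skor_conv:
  fixes \<mu> :: "nat \<Rightarrow> real measure" and P :: "real measure" and h :: "nat \<Rightarrow> real \<Rightarrow> real"
  assumes \<mu>: "\<And>n. real_distribution (\<mu> n)" and P: "real_distribution P" and wc: "weak_conv_m \<mu> P"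
    and hmeas: "\<And>n. h n \<in> borel_measurable borel" and gmeas: "g \<in> borel_measurable borel"
    and hbd: "\<And>n y. \<bar>h n y\<bar> \<le> B"
    and AEpos: "AE y in P. y > 0"
    and conv: "\<And>yn y. y > 0 \<Longrightarrow> (yn \<longlonglongrightarrow> y) \<Longrightarrow> ((\<lambda>n. h n (yn n)) \<longlonglongrightarrow> g y)"
  shows "(\<lambda>n. integral\<^sup>L (\<mu> n) (h n)) \<longlonglongrightarrow> integral\<^sup>L P g"
proof -
  obtain \<Omega> :: "real measure" and Ys :: "nat \<Rightarrow> real \<Rightarrow> real" and Y :: "real \<Rightarrow> real" where
    \<Omega>: "prob_space \<Omega>" and Ysm: "\<And>n. Ys n \<in> measurable \<Omega> borel"
    and Ysd: "\<And>n. distr \<Omega> borel (Ys n) = \<mu> n" and Ym: "Y \<in> measurable \<Omega> lborel"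
    and Yd: "distr \<Omega> borel Y = P" and Yconv: "\<And>x. x \<in> space \<Omega> \<Longrightarrow> (\<lambda>n. Ys n x) \<longlonglongrightarrow> Y x"
    using Skorohod[OF \<mu> P wc] by blast
  interpret \<Omega>: prob_space \<Omega> by (rule \<Omega>)
  have Ym': "Y \<in> measurable \<Omega> borel" using Ym by simp
  have e1: "integral\<^sup>L (\<mu> n) (h n) = integral\<^sup>L \<Omega> (\<lambda>x. h n (Ys n x))" for n
    using integral_distr[OF Ysm hmeas, of n n] Ysd[of n] by simp
  have e2: "integral\<^sup>L P g = integral\<^sup>L \<Omega> (\<lambda>x. g (Y x))"
    using integral_distr[OF Ym' gmeas] Yd by simp
  have AEY: "AE x in \<Omega>. Y x > 0"
  proof -
    have "AE y in distr \<Omega> borel Y. y > 0" unfolding Yd by (rule AEpos)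
    thus ?thesis by (rule AE_distrD[OF Ym'])
  qed
  have "(\<lambda>n. integral\<^sup>L \<Omega> (\<lambda>x. h n (Ys n x))) \<longlonglongrightarrow> integral\<^sup>L \<Omega> (\<lambda>x. g (Y x))"
  proof (rule integral_dominated_convergence[where w="\<lambda>_. B"])
    show "(\<lambda>x. g (Y x)) \<in> borel_measurable \<Omega>" using gmeas Ym' by measurable
    show "(\<lambda>x. h n (Ys n x)) \<in> borel_measurable \<Omega>" for n using hmeas Ysm by measurable
    show "integrable \<Omega> (\<lambda>_. B)" by simp
    show "AE x in \<Omega>. (\<lambda>n. h n (Ys n x)) \<longlonglongrightarrow> g (Y x)"
      using AEY
    proof (rule AE_mp)
      show "AE x in \<Omega>. 0 < Y x \<longrightarrow> (\<lambda>n. h n (Ys n x)) \<longlonglongrightarrow> g (Y x)"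
        by (rule AE_I2) (auto intro!: conv Yconv)
    qed
    show "AE x in \<Omega>. norm (h n (Ys n x)) \<le> B" for n using hbd by simp
  qed
  thus ?thesis using e1 e2 by simp
qed


definition condm :: "'a measure \<Rightarrow> ('a \<Rightarrow> real) \<Rightarrow> real \<Rightarrow> real \<Rightarrow> real \<Rightarrow> real measure" where
  "condm M Z bn \<alpha> c = (if measure M {\<omega>\<in>space M. Z \<omega> / bn > c} > 0
     then uniform_measure (distr M borel (\<lambda>\<omega>. Z \<omega> / bn)) {c<..} else pareto \<alpha> c)"

context
  fixes M :: "'a measure" and Z :: "'a \<Rightarrow> real" and bn c :: real
  assumes P: "prob_space M" and Zm[measurable]: "Z \<in> borel_measurable M"
begin

interpretation prob_space M by (rule P)

lemma emeasure_D: "emeasure (distr M borel (\<lambda>\<omega>. Z \<omega> / bn)) {c<..} = ennreal (measure M {\<omega>\<in>space M. Z \<omega> / bn > c})"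
proof -
  have "emeasure (distr M borel (\<lambda>\<omega>. Z \<omega> / bn)) {c<..} = emeasure M ((\<lambda>\<omega>. Z \<omega> / bn) -` {c<..} \<inter> space M)"
    by (rule emeasure_distr) auto
  also have "(\<lambda>\<omega>. Z \<omega> / bn) -` {c<..} \<inter> space M = {\<omega>\<in>space M. Z \<omega> / bn > c}" by auto
  finally show ?thesis by (simp add: emeasure_eq_measure)
qed

lemma condm_rd: "real_distribution (condm M Z bn \<alpha> c)"
proof (cases "measure M {\<omega>\<in>space M. Z \<omega> / bn > c} > 0")
  case True
  have "prob_space (uniform_measure (distr M borel (\<lambda>\<omega>. Z \<omega> / bn)) {c<..})"
    by (rule prob_space_uniform_measure) (use True in \<open>simp_all add: emeasure_D\<close>)
  thus ?thesis using True unfolding condm_def real_distribution_def real_distribution_axioms_def by simp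
next
  case False
  thus ?thesis using real_distribution_pareto unfolding condm_def by simp
qed

lemma condm_cdf:
  assumes p: "measure M {\<omega>\<in>space M. Z \<omega> / bn > c} > 0"
  shows "cdf (condm M Z bn \<alpha> c) x = (if x \<le> c then 0 else
           1 - measure M {\<omega>\<in>space M. Z \<omega> / bn > x} / measure M {\<omega>\<in>space M. Z \<omega> / bn > c})"
proof -
  let ?D = "distr M borel (\<lambda>\<omega>. Z \<omega> / bn)"
  let ?p = "measure M {\<omega>\<in>space M. Z \<omega> / bn > c}"
  have cm: "condm M Z bn \<alpha> c = uniform_measure ?D {c<..}" using p by (simp add: condm_def)
  have "cdf (condm M Z bn \<alpha> c) x = measure ?D ({c<..} \<inter> {..x}) / measure ?D {c<..}"
    unfolding cdf_def cm by (rule measure_uniform_measure) (use p in \<open>simp_all add: emeasure_D\<close>)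
  also have "measure ?D {c<..} = ?p" using emeasure_D p by (simp add: measure_def)
  also have "measure ?D ({c<..} \<inter> {..x}) = measure M {\<omega>\<in>space M. c < Z \<omega> / bn \<and> Z \<omega> / bn \<le> x}"
  proof -
    have "measure ?D ({c<..} \<inter> {..x}) = measure M ((\<lambda>\<omega>. Z \<omega> / bn) -` ({c<..} \<inter> {..x}) \<inter> space M)"
      by (rule measure_distr) auto
    also have "(\<lambda>\<omega>. Z \<omega> / bn) -` ({c<..} \<inter> {..x}) \<inter> space M = {\<omega>\<in>space M. c < Z \<omega> / bn \<and> Z \<omega> / bn \<le> x}"
      by auto
    finally show ?thesis .
  qed
  also have "measure M {\<omega>\<in>space M. c < Z \<omega> / bn \<and> Z \<omega> / bn \<le> x}
      = (if x \<le> c then 0 else ?p - measure M {\<omega>\<in>space M. Z \<omega> / bn > x})"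
  proof (cases "x \<le> c")
    case True
    hence e: "{\<omega>\<in>space M. c < Z \<omega> / bn \<and> Z \<omega> / bn \<le> x} = {}" by auto
    show ?thesis using True by (simp only: e measure_empty if_True)
  next
    case False
    have "{\<omega>\<in>space M. c < Z \<omega> / bn \<and> Z \<omega> / bn \<le> x}
        = {\<omega>\<in>space M. Z \<omega> / bn > c} - {\<omega>\<in>space M. Z \<omega> / bn > x}" by auto
    moreover have "measure M ({\<omega>\<in>space M. Z \<omega> / bn > c} - {\<omega>\<in>space M. Z \<omega> / bn > x})
        = ?p - measure M {\<omega>\<in>space M. Z \<omega> / bn > x}"
      by (rule finite_measure_Diff) (use False in auto)
    ultimately show ?thesis using False by simp
  qed
  finally show ?thesis using p by (simp add: diff_divide_distrib)
qed

lemma condm_integral: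
  assumes p: "measure M {\<omega>\<in>space M. Z \<omega> / bn > c} > 0" and h[measurable]: "h \<in> borel_measurable borel"
  shows "integral\<^sup>L (condm M Z bn \<alpha> c) h
    = (\<integral>\<omega>. h (Z \<omega> / bn) * indicator {\<omega>\<in>space M. Z \<omega> / bn > c} \<omega> \<partial>M) / measure M {\<omega>\<in>space M. Z \<omega> / bn > c}"
proof -
  let ?D = "distr M borel (\<lambda>\<omega>. Z \<omega> / bn)"
  let ?p = "measure M {\<omega>\<in>space M. Z \<omega> / bn > c}"
  have one: "1 / ennreal ?p = ennreal (1 / ?p)" using p divide_ennreal[of 1 ?p] by simp
  have dens: "(\<lambda>y. indicator {c<..} y / emeasure ?D {c<..}) = (\<lambda>y. ennreal (indicator {c<..} y / ?p))"
    using p one by (auto simp: emeasure_D fun_eq_iff indicator_def)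
  have "integral\<^sup>L (condm M Z bn \<alpha> c) h = integral\<^sup>L (density ?D (\<lambda>y. ennreal (indicator {c<..} y / ?p))) h"
    using p unfolding condm_def uniform_measure_def dens by simp
  also have "\<dots> = integral\<^sup>L ?D (\<lambda>y. (indicator {c<..} y / ?p) *\<^sub>R h y)"
    by (rule integral_density) (use p in auto)
  also have "\<dots> = (\<integral>\<omega>. (indicator {c<..} (Z \<omega> / bn) / ?p) *\<^sub>R h (Z \<omega> / bn) \<partial>M)"
    by (rule integral_distr) auto
  also have "\<dots> = (\<integral>\<omega>. (1 / ?p) * (h (Z \<omega> / bn) * indicator {\<omega>\<in>space M. Z \<omega> / bn > c} \<omega>) \<partial>M)"
    by (rule Bochner_Integration.integral_cong) (auto simp: indicator_def)
  also have "\<dots> = (\<integral>\<omega>. h (Z \<omega> / bn) * indicator {\<omega>\<in>space M. Z \<omega> / bn > c} \<omega> \<partial>M) / ?p"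
    by simp
  finally show ?thesis .
qed

end


lemma nu_integral:
  fixes f :: "ereal^'p \<Rightarrow> real" and \<alpha> c \<epsilon> B :: real and v :: "real^'p"
  assumes \<alpha>: "\<alpha> > 0" and c: "c > 0" and vnn: "\<forall>i. 0 \<le> v $ i"
    and fmeas[measurable]: "f \<in> borel_measurable borel" and fnn: "\<forall>x. 0 \<le> f x"
    and fbd: "\<forall>x\<in>cone. f x \<le> B"
    and van: "\<forall>x\<in>cone. (\<forall>i. x $ i < ereal \<epsilon>) \<longrightarrow> f x = 0"
    and cv: "\<forall>i. c * v $ i < \<epsilon>"
  shows "(\<integral>\<^sup>+ x. ennreal (f x) \<partial>nuv \<alpha> v)
    = ennreal (c powr (-\<alpha>) * integral\<^sup>L (pareto \<alpha> c) (\<lambda>y. f (emb (max y 0 *\<^sub>R v))))"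
proof -
  define d where "d = c powr (-\<alpha>)"
  have d: "d > 0" using c by (simp add: d_def)
  define gP where "gP u = f (emb (max (c * u powr (-1/\<alpha>)) 0 *\<^sub>R v))" for u :: real
  have gPm[measurable]: "gP \<in> borel_measurable borel" unfolding gP_def by measurable
  have dpow: "(d * u) powr (-1/\<alpha>) = c * u powr (-1/\<alpha>)" if u: "u > 0" for u
  proof -
    have "(d * u) powr (-1/\<alpha>) = d powr (-1/\<alpha>) * u powr (-1/\<alpha>)" using d u by (simp add: powr_mult)
    also have "d powr (-1/\<alpha>) = c" using c \<alpha> by (simp add: d_def powr_powr)
    finally show ?thesis .
  qed
  have pt: "ennreal (f (rayv \<alpha> v (0 + d * u))) * indicator {0<..} (0 + d * u)
      = ennreal (gP u) * indicator {0<..1} u" for u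
  proof (cases "u > 0")
    case False
    hence "\<not> (0 < d * u)" using d by (simp add: zero_less_mult_iff)
    thus ?thesis using False by (simp add: indicator_def)
  next
    case True
    have pos: "c * u powr (-1/\<alpha>) > 0" using True c by simp
    have r: "rayv \<alpha> v (d * u) = emb (max (c * u powr (-1/\<alpha>)) 0 *\<^sub>R v)"
      unfolding rayv_def dpow[OF True] using pos by simp
    show ?thesis
    proof (cases "u \<le> 1")
      case True
      thus ?thesis using \<open>u > 0\<close> d r by (simp add: gP_def indicator_def)
    next
      case False
      have "\<not> (1 < u powr (-1/\<alpha>))" using powr_inv_less_iff[of u 1 \<alpha>] False \<open>u > 0\<close> \<alpha> by simp
      hence le1: "u powr (-1/\<alpha>) \<le> 1" by simp
      have "f (emb (max (c * u powr (-1/\<alpha>)) 0 *\<^sub>R v)) = 0"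
      proof (rule van[rule_format])
        show "emb (max (c * u powr (-1/\<alpha>)) 0 *\<^sub>R v) \<in> cone" using vnn by (auto simp: cone_def)
        fix i
        have "c * u powr (-1/\<alpha>) * v $ i \<le> c * 1 * v $ i"
          using le1 c vnn by (intro mult_right_mono mult_left_mono) auto
        thus "emb (max (c * u powr (-1/\<alpha>)) 0 *\<^sub>R v) $ i < ereal \<epsilon>"
          using cv[rule_format, of i] pos by simp
      qed
      thus ?thesis using False \<open>u > 0\<close> d r by (simp add: indicator_def)
    qed
  qed
  have gPb: "0 \<le> gP u \<and> gP u \<le> B" for u
    using fnn fbd vnn by (auto simp: gP_def cone_def)
  let ?R = "restrict_space lborel {0<..(1::real)}"
  interpret U: prob_space ?R by (rule prob_space_unit)
  have intR: "integrable ?R gP"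
    by (rule U.integrable_const_bound[where B=B]) (use gPb in \<open>auto intro!: AE_I2 measurable_restrict_space1\<close>)
  have "(\<integral>\<^sup>+ x. ennreal (f x) \<partial>nuv \<alpha> v) = (\<integral>\<^sup>+ s. ennreal (f (rayv \<alpha> v s)) * indicator {0<..} s \<partial>lborel)"
    by (rule nn_integral_nuv) measurable
  also have "\<dots> = ennreal \<bar>d\<bar> * (\<integral>\<^sup>+ u. ennreal (f (rayv \<alpha> v (0 + d * u))) * indicator {0<..} (0 + d * u) \<partial>lborel)"
    by (rule nn_integral_real_affine) (use d in auto)
  also have "(\<integral>\<^sup>+ u. ennreal (f (rayv \<alpha> v (0 + d * u))) * indicator {0<..} (0 + d * u) \<partial>lborel)
      = (\<integral>\<^sup>+ u. ennreal (gP u) * indicator {0<..1} u \<partial>lborel)"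
    by (simp only: pt)
  also have "\<dots> = (\<integral>\<^sup>+ u. ennreal (gP u) \<partial>?R)"
    by (subst nn_integral_restrict_space) auto
  also have "\<dots> = ennreal (integral\<^sup>L ?R gP)"
    by (rule nn_integral_eq_integral[OF intR]) (use gPb in \<open>auto intro!: AE_I2\<close>)
  also have "integral\<^sup>L ?R gP = integral\<^sup>L (pareto \<alpha> c) (\<lambda>y. f (emb (max y 0 *\<^sub>R v)))"
    unfolding pareto_def gP_def
    by (rule integral_distr[symmetric, OF pareto_map_meas]) measurable
  finally show ?thesis
    using d by (simp add: d_def ennreal_mult' integral_nonneg_AE)
qed


lemma tfun_meas[measurable]: "tfun \<in> borel_measurable borel" unfolding tfun_def by measurable
lemma tinv_meas[measurable]: "tinv \<in> borel_measurable borel" unfolding tinv_def by measurable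
lemma circ_vec_meas[measurable]: "circ_vec a \<in> borel_measurable borel"
  unfolding circ_vec_def by (rule vec_lambda_measurable) measurable

lemma main_vague:
  fixes M :: "'a measure" and Z :: "'a \<Rightarrow> real" and a :: "real ^ 'p"
    and \<alpha> :: real and b :: "nat \<Rightarrow> real" and f :: "ereal^'p \<Rightarrow> real"
  assumes P: "prob_space M"
    and Zm[measurable]: "Z \<in> borel_measurable M"
    and \<alpha>: "\<alpha> > 0"
    and bpos: "\<forall>n. b n > 0"
    and H1: "\<forall>x>0. ((\<lambda>n. real n * measure M {\<omega>\<in>space M. Z \<omega> / b n > x})
                \<longlongrightarrow> x powr (-\<alpha>)) sequentially"
    and H2: "\<forall>k>0. ((\<lambda>n. real n * measure M {\<omega>\<in>space M. Z \<omega> \<le> exp (- k * b n)})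
                \<longlongrightarrow> 0) sequentially"
    and tf: "testfun f"
  shows "((\<lambda>n. ennreal (real n) * (\<integral>\<^sup>+ \<omega>. ennreal (f (emb ((1 / b n) *\<^sub>R circ_vec a (Z \<omega>)))) \<partial>M))
        \<longlongrightarrow> (\<integral>\<^sup>+ x. ennreal (f x) \<partial>nuv \<alpha> (\<chi> i. max (a $ i) 0))) sequentially"
proof -
  interpret prob_space M by (rule P)
  define v :: "real^'p" where "v = (\<chi> i. max (a $ i) 0)"
  have vnn: "\<forall>i. 0 \<le> v $ i" by (simp add: v_def)
  have binf: "filterlim b at_top sequentially" by (rule b_to_infty[OF P Zm \<alpha> bpos H1])
  obtain \<epsilon> where \<epsilon>: "\<epsilon> > 0" and van: "\<forall>x\<in>cone. (\<forall>i. x $ i < ereal \<epsilon>) \<longrightarrow> f x = 0"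
    using tf unfolding testfun_def by blast
  have fnn: "\<forall>x. 0 \<le> f x" and fcont: "continuous_on cone f" and fm[measurable]: "f \<in> borel_measurable borel"
    using tf unfolding testfun_def by auto
  obtain B0 where B0: "\<forall>x\<in>cone. f x \<le> B0" using testfun_bounded[OF tf] by blast
  define B where "B = max B0 0"
  have B: "B \<ge> 0" "\<forall>x\<in>cone. f x \<le> B" using B0 by (auto simp: B_def)
  define A where "A = (\<Sum>i\<in>UNIV. \<bar>a $ i\<bar>)"
  have aA: "\<bar>a $ i\<bar> \<le> A" for i unfolding A_def by (rule member_le_sum) auto
  have A0: "A \<ge> 0" using aA[of undefined] by linarith
  define c where "c = \<epsilon> / (4 * (A + 1))"
  have c: "c > 0" using \<epsilon> A0 by (simp add: c_def)
  define k where "k = c"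
  have k: "k > 0" using c by (simp add: k_def)
  have ceq0: "c * (4 * (A + 1)) = \<epsilon>"
  proof -
    have "4 * (A + 1) \<noteq> 0" using A0 by simp
    thus ?thesis unfolding c_def by (simp add: nonzero_eq_divide_eq[symmetric])
  qed
  have ceq: "4 * (A * c) + 4 * c = \<epsilon>" using ceq0 by (simp add: algebra_simps)
  have small: "\<bar>a $ i\<bar> * (c + k) < \<epsilon> / 2" for i
  proof -
    have "\<bar>a $ i\<bar> * (c + k) \<le> A * (c + k)" using aA[of i] c k by (intro mult_right_mono) auto
    also have "A * (c + k) = 2 * (A * c)" by (simp add: k_def algebra_simps)
    finally show ?thesis using ceq c by linarith
  qed
  have cv: "\<forall>i. c * v $ i < \<epsilon>"
  proof
    fix i
    have "v $ i \<le> A" using aA[of i] A0 by (simp add: v_def)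
    hence "c * v $ i \<le> A * c" using c by (simp add: mult_left_mono mult.commute)
    thus "c * v $ i < \<epsilon>" using ceq c \<epsilon> by linarith
  qed
  define F where "F n \<omega> = f (emb ((1 / b n) *\<^sub>R circ_vec a (Z \<omega>)))" for n \<omega>
  define h where "h n y = f (emb ((1 / b n) *\<^sub>R circ_vec a (b n * y)))" for n y
  define g where "g y = f (emb (max y 0 *\<^sub>R v))" for y
  define S where "S n = {\<omega>\<in>space M. Z \<omega> / b n > c}" for n
  define T where "T n = {\<omega>\<in>space M. Z \<omega> \<le> exp (- k * b n)}" for n
  define p where "p n = measure M (S n)" for n
  define Pc where "Pc = pareto \<alpha> c"
  define L where "L = c powr (-\<alpha>) * integral\<^sup>L Pc g"
  have Fm[measurable]: "F n \<in> borel_measurable M" for n unfolding F_def by measurable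
  have hm[measurable]: "h n \<in> borel_measurable borel" for n unfolding h_def by measurable
  have gm[measurable]: "g \<in> borel_measurable borel" unfolding g_def by measurable
  have Sm[measurable]: "S n \<in> sets M" for n unfolding S_def by measurable
  have Tm[measurable]: "T n \<in> sets M" for n unfolding T_def by measurable
  have Fb: "0 \<le> F n \<omega> \<and> F n \<omega> \<le> B" for n \<omega>
    using fnn B circ_cone[of "b n" a "Z \<omega>"] bpos by (auto simp: F_def)
  have hb: "0 \<le> h n y \<and> h n y \<le> B" for n y
    using fnn B circ_cone[of "b n" a "b n * y"] bpos by (auto simp: h_def)
  have gb: "0 \<le> g y \<and> g y \<le> B" for y
    using fnn B vnn by (auto simp: g_def cone_def)
  have Fh: "F n \<omega> = h n (Z \<omega> / b n)" for n \<omega>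
    using bpos[rule_format, of n] by (simp add: F_def h_def)
  have ev_small: "eventually (\<lambda>n. \<forall>\<omega>\<in>space M. exp (- k * b n) < Z \<omega> \<longrightarrow> Z \<omega> / b n \<le> c \<longrightarrow> F n \<omega> = 0) sequentially"
  proof -
    have "((\<lambda>n. ln 2 / b n) \<longlongrightarrow> 0) sequentially"
      by (rule tendsto_divide_0[OF tendsto_const filterlim_at_top_imp_at_infinity[OF binf]])
    hence "eventually (\<lambda>n. ln 2 / b n < \<epsilon> / 2) sequentially"
      using \<epsilon> by (intro order_tendstoD(2)) auto
    thus ?thesis
    proof eventually_elim
      case (elim n)
      show ?case
      proof (intro ballI impI)
        fix \<omega> assume \<omega>: "\<omega> \<in> space M" and lo: "exp (- k * b n) < Z \<omega>" and hi: "Z \<omega> / b n \<le> c"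
        have bn: "b n > 0" using bpos by simp
        have hi': "Z \<omega> \<le> c * b n" using hi bn by (simp add: divide_le_eq)
        show "F n \<omega> = 0" unfolding F_def
        proof (rule van[rule_format])
          show "emb ((1 / b n) *\<^sub>R circ_vec a (Z \<omega>)) \<in> cone" by (rule circ_cone[OF bn])
          fix i
          have t: "tfun (a $ i * tinv (Z \<omega>)) \<le> \<bar>a $ i\<bar> * (c + k) * b n + ln 2"
            by (rule tfun_tinv_small[OF lo hi' bn k c])
          have "tfun (a $ i * tinv (Z \<omega>)) / b n \<le> (\<bar>a $ i\<bar> * (c + k) * b n + ln 2) / b n"
            using t bn by (simp add: divide_right_mono)
          also have "\<dots> = \<bar>a $ i\<bar> * (c + k) + ln 2 / b n" using bn by (simp add: field_simps)
          also have "\<dots> < \<epsilon>" using small[of i] elim by linarith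
          finally show "emb ((1 / b n) *\<^sub>R circ_vec a (Z \<omega>)) $ i < ereal \<epsilon>"
            by (simp add: circ_vec_def)
        qed
      qed
    qed
  qed
  define I where "I n = integral\<^sup>L M (F n)" for n
  define J where "J n = (\<integral>\<omega>. F n \<omega> * indicator (S n) \<omega> \<partial>M)" for n
  have intF: "integrable M (F n)" for n
    by (rule integrable_const_bound[where B=B]) (use Fb in auto)
  have intFS: "integrable M (\<lambda>\<omega>. F n \<omega> * indicator (S n) \<omega>)" for n
    by (rule integrable_const_bound[where B=B]) (use Fb B in \<open>auto simp: indicator_def\<close>)
  have intT: "integrable M (\<lambda>\<omega>. B * indicator (T n) \<omega>)" for n
    by (rule integrable_const_bound[where B=B]) (use B in \<open>auto simp: indicator_def\<close>)
  have JI: "J n \<le> I n" for n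
    unfolding I_def J_def
    by (rule integral_mono[OF intFS intF]) (use Fb in \<open>auto simp: indicator_def\<close>)
  have ev_IJ: "eventually (\<lambda>n. I n \<le> J n + B * measure M (T n)) sequentially"
    using ev_small
  proof eventually_elim
    case (elim n)
    have "I n \<le> integral\<^sup>L M (\<lambda>\<omega>. F n \<omega> * indicator (S n) \<omega> + B * indicator (T n) \<omega>)"
      unfolding I_def
    proof (rule integral_mono[OF intF Bochner_Integration.integrable_add[OF intFS intT]])
      fix \<omega> assume \<omega>: "\<omega> \<in> space M"
      show "F n \<omega> \<le> F n \<omega> * indicator (S n) \<omega> + B * indicator (T n) \<omega>"
      proof (cases "\<omega> \<in> S n")
        case True thus ?thesis using Fb[of n \<omega>] B by (simp add: indicator_def)
      next
        case notS: False
        show ?thesis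
        proof (cases "\<omega> \<in> T n")
          case True thus ?thesis using Fb[of n \<omega>] notS by (simp add: indicator_def)
        next
          case False
          hence "exp (- k * b n) < Z \<omega>" "Z \<omega> / b n \<le> c" using notS \<omega> by (auto simp: S_def T_def)
          hence "F n \<omega> = 0" using elim \<omega> by blast
          thus ?thesis using B by (simp add: indicator_def)
        qed
      qed
    qed
    also have "\<dots> = J n + B * measure M (T n)"
      using intFS intT by (simp add: J_def)
    finally show ?case .
  qed
  have lim_p: "((\<lambda>n. real n * p n) \<longlongrightarrow> c powr (-\<alpha>)) sequentially"
    using H1 c by (simp add: p_def S_def)
  have lim_T: "((\<lambda>n. real n * measure M (T n)) \<longlongrightarrow> 0) sequentially"
    using H2 k by (simp add: T_def)
  have ev_p: "eventually (\<lambda>n. p n > 0) sequentially"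
  proof -
    have "eventually (\<lambda>n. real n * p n > 0) sequentially"
      using order_tendstoD(1)[OF lim_p, of 0] c by simp
    thus ?thesis by eventually_elim (simp add: zero_less_mult_iff)
  qed
  define \<mu> where "\<mu> n = condm M Z (b n) \<alpha> c" for n
  have rd: "real_distribution (\<mu> n)" for n unfolding \<mu>_def by (rule condm_rd[OF P Zm])
  have Pc: "real_distribution Pc" unfolding Pc_def by (rule real_distribution_pareto)
  have wc: "weak_conv_m \<mu> Pc"
    unfolding weak_conv_m_def weak_conv_def
  proof (intro allI impI)
    fix x :: real
    show "(\<lambda>n. cdf (\<mu> n) x) \<longlonglongrightarrow> cdf Pc x"
    proof (cases "x \<le> c")
      case True
      have "cdf (\<mu> n) x = 0" for n
      proof (cases "p n > 0")
        case True
        thus ?thesis using \<open>x \<le> c\<close> unfolding \<mu>_def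
          by (subst condm_cdf[OF P Zm]) (auto simp: p_def S_def)
      next
        case False
        hence "\<mu> n = Pc" by (simp add: \<mu>_def condm_def Pc_def p_def S_def)
        thus ?thesis using \<open>x \<le> c\<close> c \<alpha> by (simp add: Pc_def cdf_pareto)
      qed
      moreover have "cdf Pc x = 0" using True c \<alpha> by (simp add: Pc_def cdf_pareto)
      ultimately show ?thesis by simp
    next
      case False
      hence x: "x > 0" "x > c" using c by auto
      let ?q = "\<lambda>n. measure M {\<omega>\<in>space M. Z \<omega> / b n > x}"
      have lim_q: "((\<lambda>n. real n * ?q n) \<longlongrightarrow> x powr (-\<alpha>)) sequentially" using H1 x by simp
      have "((\<lambda>n. 1 - (real n * ?q n) / (real n * p n)) \<longlongrightarrow> 1 - x powr (-\<alpha>) / c powr (-\<alpha>)) sequentially"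
        using c by (intro tendsto_intros lim_q lim_p) simp
      moreover have "eventually (\<lambda>n. 1 - (real n * ?q n) / (real n * p n) = cdf (\<mu> n) x) sequentially"
        using ev_p eventually_gt_at_top[of 0]
      proof eventually_elim
        case (elim n)
        have "cdf (\<mu> n) x = 1 - ?q n / p n" unfolding \<mu>_def
          using elim x by (subst condm_cdf[OF P Zm]) (auto simp: p_def S_def)
        thus ?case using elim by simp
      qed
      moreover have "cdf Pc x = 1 - x powr (-\<alpha>) / c powr (-\<alpha>)"
        using x c \<alpha> by (simp add: Pc_def cdf_pareto powr_divide)
      ultimately show ?thesis by (simp add: tendsto_cong)
    qed
  qed
  have AEpos: "AE y in Pc. y > 0"
  proof -
    have "AE u in restrict_space lborel {0<..(1::real)}. c * u powr (-1/\<alpha>) > 0"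
      by (rule AE_I2) (use c in \<open>auto simp: space_restrict_space\<close>)
    thus ?thesis unfolding Pc_def pareto_def
      by (subst AE_distr_iff[OF pareto_map_meas]) auto
  qed
  have lim_int: "(\<lambda>n. integral\<^sup>L (\<mu> n) (h n)) \<longlonglongrightarrow> integral\<^sup>L Pc g"
  proof (rule skor_conv[OF rd Pc wc hm gm _ AEpos])
    show "\<bar>h n y\<bar> \<le> B" for n y using hb[of n y] by simp
    fix yn :: "nat \<Rightarrow> real" and y :: real assume y: "y > 0" and yn: "yn \<longlonglongrightarrow> y"
    have "(\<lambda>n. h n (yn n)) \<longlonglongrightarrow> f (emb (y *\<^sub>R (\<chi> i. max (a $ i) 0)))"
      unfolding h_def by (rule h_conv[OF fcont binf bpos yn y])
    thus "(\<lambda>n. h n (yn n)) \<longlonglongrightarrow> g y" using y by (simp add: g_def v_def)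
  qed
  have lim_J: "(\<lambda>n. real n * J n) \<longlonglongrightarrow> L"
  proof -
    have "(\<lambda>n. (real n * p n) * integral\<^sup>L (\<mu> n) (h n)) \<longlonglongrightarrow> c powr (-\<alpha>) * integral\<^sup>L Pc g"
      by (intro tendsto_mult lim_p lim_int)
    moreover have "eventually (\<lambda>n. (real n * p n) * integral\<^sup>L (\<mu> n) (h n) = real n * J n) sequentially"
      using ev_p
    proof eventually_elim
      case (elim n)
      have "integral\<^sup>L (\<mu> n) (h n) = J n / p n"
        unfolding \<mu>_def J_def p_def S_def using elim
        by (subst condm_integral[OF P Zm]) (auto simp: p_def S_def Fh)
      thus ?case using elim by simp
    qed
    ultimately show ?thesis by (simp add: L_def tendsto_cong)
  qed
  have lim_I: "(\<lambda>n. real n * I n) \<longlonglongrightarrow> L"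
  proof (rule tendsto_sandwich[OF _ _ lim_J])
    show "eventually (\<lambda>n. real n * J n \<le> real n * I n) sequentially"
      using JI by (auto intro!: always_eventually mult_left_mono)
    show "eventually (\<lambda>n. real n * I n \<le> real n * J n + B * (real n * measure M (T n))) sequentially"
      using ev_IJ
    proof eventually_elim
      case (elim n)
      have "real n * I n \<le> real n * (J n + B * measure M (T n))" using elim by (simp add: mult_left_mono)
      thus ?case by (simp add: algebra_simps)
    qed
    show "(\<lambda>n. real n * J n + B * (real n * measure M (T n))) \<longlonglongrightarrow> L"
      using tendsto_add[OF lim_J tendsto_mult[OF tendsto_const lim_T, of B]] by simp
  qed
  have lhs: "ennreal (real n) * (\<integral>\<^sup>+ \<omega>. ennreal (f (emb ((1 / b n) *\<^sub>R circ_vec a (Z \<omega>)))) \<partial>M)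
      = ennreal (real n * I n)" for n
  proof -
    have "(\<integral>\<^sup>+ \<omega>. ennreal (F n \<omega>) \<partial>M) = ennreal (I n)"
      unfolding I_def by (rule nn_integral_eq_integral[OF intF]) (use Fb in auto)
    moreover have "I n \<ge> 0" unfolding I_def using Fb by (simp add: integral_nonneg_AE)
    ultimately show ?thesis by (simp add: F_def ennreal_mult)
  qed
  have rhs: "(\<integral>\<^sup>+ x. ennreal (f x) \<partial>nuv \<alpha> (\<chi> i. max (a $ i) 0)) = ennreal L"
    unfolding L_def Pc_def g_def v_def[symmetric]
    by (rule nu_integral[OF \<alpha> c vnn fm fnn B(2) van cv])
  show ?thesis unfolding lhs rhs by (rule tendsto_ennrealI[OF lim_I])
qed

lemma vnz_lemma:
  fixes a :: "real^'p"
  assumes "\<exists>i. a $ i > 0"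
  shows "(\<chi> i. max (a $ i) 0) \<noteq> (0 :: real^'p)"
proof
  assume h: "(\<chi> i. max (a $ i) 0) = (0 :: real^'p)"
  obtain i where "a $ i > 0" using assms by blast
  moreover have "max (a $ i) 0 = 0" using h by (metis vec_lambda_beta zero_index)
  ultimately show False by simp
qed

theorem corollaryA2:
  fixes M :: "'a measure" and Z :: "'a \<Rightarrow> real" and a :: "real ^ 'p"
    and \<alpha> :: real and b :: "nat \<Rightarrow> real" and N :: "real ^ 'p \<Rightarrow> real"
  assumes "prob_space M"
    and "Z \<in> borel_measurable M"
    and "\<alpha> > 0"
    and "\<exists>i. a $ i > 0"
    and "\<forall>n. b n > 0"
    and "\<forall>x>0. ((\<lambda>n. real n * measure M {\<omega>\<in>space M. Z \<omega> / b n > x})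
                \<longlongrightarrow> x powr (-\<alpha>)) sequentially"
    and "\<forall>k>0. ((\<lambda>n. real n * measure M {\<omega>\<in>space M. Z \<omega> \<le> exp (- k * b n)})
                \<longlongrightarrow> 0) sequentially"
    and "is_norm N"
  shows "\<exists>\<nu>. RV_plus M (\<lambda>\<omega>. circ_vec a (Z \<omega>)) \<alpha> b \<nu>
           \<and> angular_measure N \<alpha> \<nu>
               (\<lambda>B. ennreal (N (\<chi> i. max (a $ i) 0) powr \<alpha>)
                      * indicator B ((1 / N (\<chi> i. max (a $ i) 0)) *\<^sub>R (\<chi> i. max (a $ i) 0)))"
proof (intro exI conjI)
  let ?v = "(\<chi> i. max (a $ i) 0) :: real^'p"
  have vnn: "\<forall>i. 0 \<le> ?v $ i" by simp
  have vnz: "?v \<noteq> 0" by (rule vnz_lemma[OF assms(4)])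
  show "RV_plus M (\<lambda>\<omega>. circ_vec a (Z \<omega>)) \<alpha> b (nuv \<alpha> ?v)"
    unfolding RV_plus_def
  proof (intro conjI)
    show "\<forall>\<omega>\<in>space M. \<forall>i. 0 \<le> circ_vec a (Z \<omega>) $ i"
      using tfun_pos by (simp add: circ_vec_def less_imp_le)
    show "radon_on_E (nuv \<alpha> ?v)" by (rule nuv_radon[OF assms(3) vnn vnz])
    show "vague_conv M (\<lambda>\<omega>. circ_vec a (Z \<omega>)) b (nuv \<alpha> ?v)"
      unfolding vague_conv_def
      using main_vague[OF assms(1,2,3,5,6,7)] by blast
    show "emeasure (nuv \<alpha> ?v) (space (nuv \<alpha> ?v)) \<noteq> 0" by (rule nuv_nonzero[OF assms(3) vnn vnz])
    show "\<forall>c>0. \<forall>A\<in>sets borel. A \<subseteq> Espace \<longrightarrow>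
          emeasure (nuv \<alpha> ?v) (escale c ` A) = ennreal (c powr (-\<alpha>)) * emeasure (nuv \<alpha> ?v) A"
      using nuv_homog[OF assms(3) vnn vnz] by blast
  qed
  show "angular_measure N \<alpha> (nuv \<alpha> ?v)
      (\<lambda>B. ennreal (N ?v powr \<alpha>) * indicator B ((1 / N ?v) *\<^sub>R ?v))"
    by (rule nuv_angular[OF assms(3) vnn vnz assms(8)])
qed

end
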